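(* Let $n\ge1$, let $a_0,a_1,\dots,a_n>0$, and for $1\le k\le n$ let $\psi_k$ be an even probability density function on $\mathbb{R}$ vanishing outside $[-1,1]$ whose (essential) support is exactly $[-1,1]$, with characteristic function $\varphi_k(z)=\int_{-1}^{1}\psi_k(x)\cos(zx)\,dx$. Consider the improper integral \[ I=\lim_{R\to\infty}\int_0^R\operatorname{sinc}(a_0z)\prod_{k=1}^{n}\varphi_k(a_kz)\,dz . \] If $a_0>a_1+\cdots+a_n$, then $I=\dfrac{\pi}{2a_0}$, whereas if $a_0<a_1+\cdots+a_n$, then $I<\dfrac{\pi}{2a_0}$.
   Context: $\operatorname{sinc}(x)=\sin(x)/x$ for $x\neq0$ and $\operatorname{sinc}(0)=1$. Example: for $\nu\ge-\tfrac12$, the normalized Bessel function $2^{\nu}\Gamma(\nu+1)J_\nu(z)/z^\nu$ is the characteristic function of the symmetric beta density $\frac{\Gamma(\nu+1)}{\sqrt\pi\,\Gamma(\nu+\frac12)}(1-x^2)^{\nu-\frac12}\mathbf 1_{[-1,1]}(x)$; with $\nu=0$ this gives $J_0$. *)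

theory Defs
  imports "HOL-Analysis.Analysis"
begin

definition sinc :: "real \<Rightarrow> real" where
  "sinc x = (if x = 0 then 1 else sin x / x)"

definition prob_density :: "(real \<Rightarrow> real) \<Rightarrow> bool" where
  "prob_density f \<longleftrightarrow> f \<in> borel_measurable lborel \<and> (\<forall>x. 0 \<le> f x)
     \<and> integrable lborel f \<and> integral\<^sup>L lborel f = 1"

text \<open>Even, vanishing (almost everywhere) outside [-1,1], with essential support
  exactly [-1,1]: every point of [-1,1] has every neighbourhood on which f is not a.e. zero.\<close>
definition admissible_density :: "(real \<Rightarrow> real) \<Rightarrow> bool" where
  "admissible_density f \<longleftrightarrow> prob_density f \<and> (\<forall>x. f (-x) = f x)
     \<and> (AE x in lborel. \<bar>x\<bar> > 1 \<longrightarrow> f x = 0)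
     \<and> (\<forall>x\<in>{-1..1}. \<forall>e>0. emeasure lborel {y \<in> ball x e. f y \<noteq> 0} > 0)"

definition charfun_dens :: "(real \<Rightarrow> real) \<Rightarrow> real \<Rightarrow> real" where
  "charfun_dens f z = (LBINT x=-1..1. f x * cos (z * x))"

definition partial_int :: "real \<Rightarrow> (nat \<Rightarrow> real) \<Rightarrow> (nat \<Rightarrow> real \<Rightarrow> real) \<Rightarrow> nat \<Rightarrow> real \<Rightarrow> real" where
  "partial_int a0 a \<psi> n R =
     (LBINT z=0..R. sinc (a0 * z) * (\<Prod>k\<in>{1..n}. charfun_dens (\<psi> k) (a k * z)))"

end

theory Submission imports Defs "HOL-Probability.Sinc_Integral"
begin


lemma adm_facts:
  assumes "admissible_density f"
  shows "f \<in> borel_measurable borel" "\<And>x. 0 \<le> f x" "integrable lborel f" "integral\<^sup>L lborel f = 1"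
    "\<And>x. f (-x) = f x" "AE x in lborel. \<bar>x\<bar> > 1 \<longrightarrow> f x = 0"
    "\<And>x e. x\<in>{-1..1} \<Longrightarrow> e > 0 \<Longrightarrow> emeasure lborel {y \<in> ball x e. f y \<noteq> 0} > 0"
  using assms unfolding admissible_density_def prob_density_def by auto

lemma adm_prob_space:
  assumes "admissible_density f"
  shows "prob_space (density lborel f)"
proof (rule prob_spaceI)
  note F = adm_facts[OF assms]
  have [measurable]: "f \<in> borel_measurable borel" by (rule F(1))
  have "emeasure (density lborel f) (space (density lborel f)) = (\<integral>\<^sup>+ x. ennreal (f x) \<partial>lborel)"
    by (simp add: emeasure_density)
  also have "\<dots> = ennreal (integral\<^sup>L lborel f)"
    by (rule nn_integral_eq_integral) (use F in auto)
  finally show "emeasure (density lborel f) (space (density lborel f)) = 1" using F(4) by simp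
qed

lemma adm_charfun:
  assumes "admissible_density f"
  shows "charfun_dens f t = (\<integral>x. cos (t * x) \<partial>density lborel f)"
proof -
  note F = adm_facts[OF assms]
  have [measurable]: "f \<in> borel_measurable borel" by (rule F(1))
  have "charfun_dens f t = (LBINT x : {-1..1}. f x * cos (t * x))"
    unfolding charfun_dens_def by (subst interval_integral_Icc[symmetric]) (auto simp: one_ereal_def)
  also have "\<dots> = (\<integral>x. f x * cos (t * x) \<partial>lborel)"
    unfolding set_lebesgue_integral_def
    by (rule integral_cong_AE) (use F(6) in \<open>auto split: split_indicator\<close>)
  also have "\<dots> = (\<integral>x. cos (t * x) \<partial>density lborel f)"
    by (subst integral_density) (use F in auto)
  finally show ?thesis .
qed

lemma adm_sin:
  assumes "admissible_density f"
  shows "(\<integral>x. sin (t * x) \<partial>density lborel f) = 0"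
proof -
  note F = adm_facts[OF assms]
  have [measurable]: "f \<in> borel_measurable borel" by (rule F(1))
  have e: "(\<integral>x. sin (t * x) \<partial>density lborel f) = (\<integral>x. f x * sin (t * x) \<partial>lborel)"
    by (subst integral_density) (use F in auto)
  have "(\<integral>x. f x * sin (t * x) \<partial>lborel) = \<bar>-1\<bar> *\<^sub>R (\<integral>x. f (0 + -1 * x) * sin (t * (0 + -1 * x)) \<partial>lborel)"
    by (rule lborel_integral_real_affine) simp
  also have "\<dots> = - (\<integral>x. f x * sin (t * x) \<partial>lborel)"
    using F(5) by simp
  finally show ?thesis using e by simp
qed

lemma adm_AE_bound:
  assumes "admissible_density f"
  shows "AE x in density lborel f. \<bar>x\<bar> \<le> 1"
proof -
  note F = adm_facts[OF assms]
  have [measurable]: "f \<in> borel_measurable borel" by (rule F(1))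
  show ?thesis
    by (subst AE_density) (use F(6) in \<open>auto elim!: AE_mp\<close>)
qed

lemma adm_pos:
  assumes "admissible_density f" "c < 1"
  shows "emeasure (density lborel f) {c<..} > 0"
proof (rule ccontr)
  note F = adm_facts[OF assms(1)]
  have [measurable]: "f \<in> borel_measurable borel" by (rule F(1))
  assume "\<not> ?thesis"
  then have "emeasure (density lborel f) {c<..} = 0" by (simp add: zero_less_iff_neq_zero)
  then have "(\<integral>\<^sup>+ x. ennreal (f x) * indicator {c<..} x \<partial>lborel) = 0"
    by (simp add: emeasure_density)
  then have "AE x in lborel. ennreal (f x) * indicator {c<..} x = 0"
    by (subst (asm) nn_integral_0_iff_AE) auto
  then have ae: "AE x in lborel. \<not> (x \<in> ball 1 (1 - c) \<and> f x \<noteq> 0)"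
    by (rule AE_mp) (use F(2) in \<open>auto simp: dist_real_def split: split_indicator\<close>)
  have "{y \<in> ball 1 (1 - c). f y \<noteq> 0} \<in> null_sets lborel"
  proof -
    have "{x \<in> space lborel. \<not> \<not> (x \<in> ball 1 (1 - c) \<and> f x \<noteq> 0)} \<in> null_sets lborel"
      using ae by (subst (asm) AE_iff_null) auto
    then show ?thesis by simp
  qed
  moreover have "emeasure lborel {y \<in> ball 1 (1 - c). f y \<noteq> 0} > 0"
    using F(7)[of 1 "1 - c"] assms(2) by simp
  ultimately show False by auto
qed



fun mu :: "(nat \<Rightarrow> real) \<Rightarrow> (nat \<Rightarrow> real \<Rightarrow> real) \<Rightarrow> nat \<Rightarrow> real measure" where
  "mu a \<psi> 0 = return borel 0"
| "mu a \<psi> (Suc m) = distr (mu a \<psi> m \<Otimes>\<^sub>M density lborel (\<psi> (Suc m))) borel (\<lambda>(x,y). x + a (Suc m) * y)"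

lemma sets_mu[measurable_cong]: "sets (mu a \<psi> m) = sets borel"
  by (cases m) auto

lemma space_mu[simp]: "space (mu a \<psi> m) = UNIV"
  using sets_eq_imp_space_eq[OF sets_mu] by simp

lemma mu_props:
  assumes "m \<le> n" "\<forall>k\<in>{1..n}. a k > 0" "\<forall>k\<in>{1..n}. admissible_density (\<psi> k)"
  shows "prob_space (mu a \<psi> m)
    \<and> (\<forall>z. (\<Prod>k\<in>{1..m}. charfun_dens (\<psi> k) (a k * z)) = (\<integral>s. cos (z * s) \<partial>mu a \<psi> m))
    \<and> (AE s in mu a \<psi> m. \<bar>s\<bar> \<le> (\<Sum>k\<in>{1..m}. a k))
    \<and> (\<forall>c < (\<Sum>k\<in>{1..m}. a k). emeasure (mu a \<psi> m) {c<..} > 0)"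
  using assms(1)
proof (induction m)
  case 0
  interpret prob_space "return borel (0::real)" by (rule prob_space_return) simp
  have "AE s in return borel (0::real). s = 0" by (subst AE_return) auto
  moreover have "mu a \<psi> 0 = return borel 0" by simp
  ultimately show ?case
    by (simp only:) (auto simp: prob_space_axioms emeasure_return integral_return)
next
  case (Suc m)
  let ?N = "mu a \<psi> m" and ?D = "density lborel (\<psi> (Suc m))" and ?b = "a (Suc m)"
  have IH: "prob_space ?N" "\<And>z. (\<Prod>k\<in>{1..m}. charfun_dens (\<psi> k) (a k * z)) = (\<integral>s. cos (z * s) \<partial>?N)"
    "AE s in ?N. \<bar>s\<bar> \<le> (\<Sum>k\<in>{1..m}. a k)" "\<And>c. c < (\<Sum>k\<in>{1..m}. a k) \<Longrightarrow> emeasure ?N {c<..} > 0"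
    using Suc by auto
  have adm: "admissible_density (\<psi> (Suc m))" and bpos: "?b > 0" using Suc.prems assms by auto
  note F = adm_facts[OF adm]
  have [measurable]: "\<psi> (Suc m) \<in> borel_measurable borel" by (rule F(1))
  interpret N: prob_space ?N by (rule IH(1))
  interpret D: prob_space ?D by (rule adm_prob_space[OF adm])
  interpret P: pair_prob_space ?N ?D ..
  have meas[measurable]: "(\<lambda>(x,y). x + ?b * y) \<in> measurable (?N \<Otimes>\<^sub>M ?D) borel"
    by measurable
  have ps: "prob_space (mu a \<psi> (Suc m))"
    by simp (rule P.prob_space_distr[OF meas])
  have ch: "(\<Prod>k\<in>{1..Suc m}. charfun_dens (\<psi> k) (a k * z)) = (\<integral>s. cos (z * s) \<partial>mu a \<psi> (Suc m))" for z
  proof -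
    have "(\<integral>s. cos (z * s) \<partial>mu a \<psi> (Suc m)) = (\<integral>p. cos (z * (fst p + ?b * snd p)) \<partial>(?N \<Otimes>\<^sub>M ?D))"
      by (simp add: integral_distr case_prod_beta')
    also have "\<dots> = (\<integral>x. (\<integral>y. cos (z * (x + ?b * y)) \<partial>?D) \<partial>?N)"
      by (rule P.integral_fst'[symmetric, where f="\<lambda>p. cos (z * (fst p + ?b * snd p))", simplified])
         (rule P.integrable_const_bound[where B=1], auto)
    also have "\<dots> = (\<integral>x. cos (z * x) * charfun_dens (\<psi> (Suc m)) (?b * z) \<partial>?N)"
    proof (rule Bochner_Integration.integral_cong[OF refl])
      fix x
      have "(\<integral>y. cos (z * (x + ?b * y)) \<partial>?D)
          = (\<integral>y. cos (z * x) * cos ((?b * z) * y) - sin (z * x) * sin ((?b * z) * y) \<partial>?D)"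
        by (simp add: distrib_left cos_add ac_simps)
      also have "\<dots> = cos (z * x) * (\<integral>y. cos ((?b * z) * y) \<partial>?D) - sin (z * x) * (\<integral>y. sin ((?b * z) * y) \<partial>?D)"
        by (subst Bochner_Integration.integral_diff)
           (auto intro!: D.integrable_const_bound[where B=1])
      also have "\<dots> = cos (z * x) * charfun_dens (\<psi> (Suc m)) (?b * z)"
        using adm_sin[OF adm] adm_charfun[OF adm] by simp
      finally show "(\<integral>y. cos (z * (x + ?b * y)) \<partial>?D) = cos (z * x) * charfun_dens (\<psi> (Suc m)) (?b * z)" .
    qed
    also have "\<dots> = (\<Prod>k\<in>{1..m}. charfun_dens (\<psi> k) (a k * z)) * charfun_dens (\<psi> (Suc m)) (?b * z)"
      using IH(2) by simp
    also have "\<dots> = (\<Prod>k\<in>{1..Suc m}. charfun_dens (\<psi> k) (a k * z))"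
      by simp
    finally show ?thesis ..
  qed
  have ae: "AE s in mu a \<psi> (Suc m). \<bar>s\<bar> \<le> (\<Sum>k\<in>{1..Suc m}. a k)"
  proof -
    have "AE p in ?N \<Otimes>\<^sub>M ?D. \<bar>fst p + ?b * snd p\<bar> \<le> (\<Sum>k\<in>{1..m}. a k) + ?b"
    proof (rule P.AE_pair_measure)
      show "{x \<in> space (?N \<Otimes>\<^sub>M ?D). \<bar>fst x + ?b * snd x\<bar> \<le> (\<Sum>k\<in>{1..m}. a k) + ?b} \<in> sets (?N \<Otimes>\<^sub>M ?D)"
        by measurable
      show "AE x in ?N. AE y in ?D. \<bar>fst (x, y) + ?b * snd (x, y)\<bar> \<le> (\<Sum>k\<in>{1..m}. a k) + ?b"
        using IH(3)
      proof eventually_elim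
        case (elim x)
        show ?case using adm_AE_bound[OF adm]
        proof eventually_elim
          case (elim y)
          have "\<bar>x + ?b * y\<bar> \<le> \<bar>x\<bar> + ?b * \<bar>y\<bar>"
            using bpos by (simp add: abs_triangle_ineq[THEN order_trans] abs_mult)
          also have "\<dots> \<le> (\<Sum>k\<in>{1..m}. a k) + ?b * 1"
            using elim bpos \<open>\<bar>x\<bar> \<le> _\<close> by (intro add_mono mult_left_mono) auto
          finally show ?case by simp
        qed
      qed
    qed
    then show ?thesis
      unfolding mu.simps by (subst AE_distr_iff) (auto simp: case_prod_beta')
  qed
  have pos: "emeasure (mu a \<psi> (Suc m)) {c<..} > 0" if c: "c < (\<Sum>k\<in>{1..Suc m}. a k)" for c
  proof -
    define S where "S = (\<Sum>k\<in>{1..m}. a k)"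
    define d where "d = S + ?b - c"
    have dpos: "d > 0" using c by (simp add: d_def S_def)
    have "emeasure ?N {S - d/2<..} > 0" using IH(4)[of "S - d/2"] dpos by (simp add: S_def)
    moreover have "emeasure ?D {1 - d/(2 * ?b)<..} > 0"
      by (rule adm_pos[OF adm]) (use dpos bpos in simp)
    ultimately have "0 < emeasure ?N {S - d/2<..} * emeasure ?D {1 - d/(2 * ?b)<..}"
      by (simp add: ennreal_zero_less_mult_iff)
    also have "\<dots> = emeasure (?N \<Otimes>\<^sub>M ?D) ({S - d/2<..} \<times> {1 - d/(2 * ?b)<..})"
      by (rule D.emeasure_pair_measure_Times[symmetric]) auto
    also have "\<dots> \<le> emeasure (?N \<Otimes>\<^sub>M ?D) ((\<lambda>(x,y). x + ?b * y) -` {c<..} \<inter> space (?N \<Otimes>\<^sub>M ?D))"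
    proof (rule emeasure_mono)
      show "{S - d / 2<..} \<times> {1 - d / (2 * ?b)<..} \<subseteq> (\<lambda>(x, y). x + ?b * y) -` {c<..} \<inter> space (?N \<Otimes>\<^sub>M ?D)"
      proof (intro subsetI)
        fix p assume "p \<in> {S - d / 2<..} \<times> {1 - d / (2 * ?b)<..}"
        then obtain x y where p: "p = (x, y)" and x: "x \<in> {S - d / 2<..}" and y: "y \<in> {1 - d / (2 * ?b)<..}"
          by auto
        have "?b * y > ?b * (1 - d / (2 * ?b))" using y bpos by simp
        also have "?b * (1 - d / (2 * ?b)) = ?b - d/2" using bpos by (simp add: field_simps)
        finally have "?b * y > ?b - d/2" .
        moreover have "x > S - d/2" using x by simp
        ultimately have "x + ?b * y > (S - d/2) + (?b - d/2)" by simp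
        then have "c < x + ?b * y" by (simp add: d_def)
        then show "p \<in> (\<lambda>(x, y). x + ?b * y) -` {c<..} \<inter> space (?N \<Otimes>\<^sub>M ?D)"
          by (simp add: p space_pair_measure)
      qed
      show "(\<lambda>(x, y). x + ?b * y) -` {c<..} \<inter> space (?N \<Otimes>\<^sub>M ?D) \<in> sets (?N \<Otimes>\<^sub>M ?D)"
        by measurable
    qed
    also have "\<dots> = emeasure (mu a \<psi> (Suc m)) {c<..}"
      by (simp add: emeasure_distr)
    finally show ?thesis .
  qed
  show ?case using ps ch ae pos by blast
qed



lemma abs_sinc_le: "\<bar>Defs.sinc x\<bar> \<le> 1"
  unfolding Defs.sinc_def using abs_sin_x_le_abs_x[of x]
  by (auto simp: abs_divide divide_le_eq_1)

lemma measurable_sinc'[measurable]: "Defs.sinc \<in> borel_measurable borel"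
proof -
  have e: "Defs.sinc = (\<lambda>x. if x = 0 then 1 else sin x / x)" by (auto simp: Defs.sinc_def fun_eq_iff)
  show ?thesis by (subst e) (rule borel_measurable_sinc)
qed

lemma G_eq:
  assumes "R \<ge> 0" "a0 > 0"
  shows "(LBINT z. indicator {0..R} z * (Defs.sinc (a0 * z) * cos (z * s)))
    = (1 / (2 * a0)) * (sgn (a0 + s) * Si (R * \<bar>a0 + s\<bar>) + sgn (a0 - s) * Si (R * \<bar>a0 - s\<bar>))"
proof -
  have "(LBINT z. indicator {0..R} z * (Defs.sinc (a0 * z) * cos (z * s)))
      = (LBINT z : {0..R}. Defs.sinc (a0 * z) * cos (z * s))"
    by (simp add: set_lebesgue_integral_def)
  also have "\<dots> = (LBINT z=ereal 0..ereal R. Defs.sinc (a0 * z) * cos (z * s))"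
    by (rule interval_integral_Icc[symmetric]) fact
  also have "\<dots> = (LBINT t=ereal 0..ereal R. (1 / (2 * a0)) * (sin (t * (a0 + s)) / t + sin (t * (a0 - s)) / t))"
  proof (rule interval_integral_discrete_difference[of "{0}"])
    fix t :: real assume "t \<notin> {0}"
    then have t: "t \<noteq> 0" by simp
    have "sin (t * (a0 + s)) + sin (t * (a0 - s)) = 2 * sin (a0 * t) * cos (t * s)"
      by (simp add: distrib_left right_diff_distrib sin_add sin_diff ac_simps)
    then show "Defs.sinc (a0 * t) * cos (t * s) = (1 / (2 * a0)) * (sin (t * (a0 + s)) / t + sin (t * (a0 - s)) / t)"
      using t assms(2) by (simp add: Defs.sinc_def field_simps add_divide_distrib[symmetric])
  next
    fix t :: real assume "t \<notin> {0}"
    then have t: "t \<noteq> 0" by simp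
    have "sin (t * (a0 + s)) + sin (t * (a0 - s)) = 2 * sin (a0 * t) * cos (t * s)"
      by (simp add: distrib_left right_diff_distrib sin_add sin_diff ac_simps)
    then show "Defs.sinc (a0 * t) * cos (t * s) = (1 / (2 * a0)) * (sin (t * (a0 + s)) / t + sin (t * (a0 - s)) / t)"
      using t assms(2) by (simp add: Defs.sinc_def field_simps add_divide_distrib[symmetric])
  qed auto
  also have "\<dots> = (1 / (2 * a0)) * ((LBINT t=ereal 0..ereal R. sin (t * (a0 + s)) / t) + (LBINT t=ereal 0..ereal R. sin (t * (a0 - s)) / t))"
    by (subst interval_lebesgue_integral_mult_right, subst interval_lebesgue_integral_add(2))
       (auto intro: integrable_sinc')
  also have "\<dots> = (1 / (2 * a0)) * (sgn (a0 + s) * Si (R * \<bar>a0 + s\<bar>) + sgn (a0 - s) * Si (R * \<bar>a0 - s\<bar>))"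
    using LBINT_I0c_sin_scale_divide[OF assms(1)] by (simp add: zero_ereal_def)
  finally show ?thesis .
qed

lemma sgnSi_lim: "((\<lambda>R. sgn \<theta> * Si (R * \<bar>\<theta>\<bar>)) \<longlongrightarrow> sgn \<theta> * (pi / 2)) at_top"
proof (cases "\<theta> = 0")
  case True then show ?thesis by simp
next
  case False
  have "filterlim (\<lambda>R. \<bar>\<theta>\<bar> * R) at_top at_top"
    using False by (intro filterlim_tendsto_pos_mult_at_top[OF tendsto_const _ filterlim_ident]) auto
  then have "filterlim (\<lambda>R. R * \<bar>\<theta>\<bar>) at_top at_top" by (simp add: mult.commute)
  then show ?thesis
    by (intro tendsto_intros filterlim_compose[OF Si_at_top])
qed



theorem mainTheorem11:
  fixes n :: nat and a0 :: real and a :: "nat \<Rightarrow> real" and \<psi> :: "nat \<Rightarrow> real \<Rightarrow> real"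
  assumes "n \<ge> 1" and "a0 > 0" and "\<forall>k\<in>{1..n}. a k > 0"
    and "\<forall>k\<in>{1..n}. admissible_density (\<psi> k)"
  shows "(a0 > (\<Sum>k\<in>{1..n}. a k) \<longrightarrow>
            (partial_int a0 a \<psi> n \<longlongrightarrow> pi / (2 * a0)) at_top)
       \<and> (a0 < (\<Sum>k\<in>{1..n}. a k) \<longrightarrow>
            (\<exists>I. (partial_int a0 a \<psi> n \<longlongrightarrow> I) at_top \<and> I < pi / (2 * a0)))"
proof -
  let ?\<mu> = "mu a \<psi> n"
  let ?S = "\<Sum>k\<in>{1..n}. a k"
  note MP = mu_props[OF order_refl assms(3) assms(4)]
  interpret P: prob_space ?\<mu> using MP by blast
  interpret Q: pair_sigma_finite lborel ?\<mu> ..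
  have char: "\<And>z. (\<Prod>k\<in>{1..n}. charfun_dens (\<psi> k) (a k * z)) = (\<integral>s. cos (z * s) \<partial>?\<mu>)"
    using MP by blast
  have AEb: "AE s in ?\<mu>. \<bar>s\<bar> \<le> ?S" using MP by blast
  have posm: "\<And>c. c < ?S \<Longrightarrow> emeasure ?\<mu> {c<..} > 0" using MP by blast
  from bounded_Si obtain B where B: "\<And>T. \<bar>Si T\<bar> \<le> B" by auto
  define G where "G R s = (1 / (2 * a0)) * (sgn (a0 + s) * Si (R * \<bar>a0 + s\<bar>) + sgn (a0 - s) * Si (R * \<bar>a0 - s\<bar>))" for R s
  define L where "L s = (1 / (2 * a0)) * (sgn (a0 + s) * (pi / 2) + sgn (a0 - s) * (pi / 2))" for s
  have [measurable]: "G R \<in> borel_measurable borel" for R unfolding G_def by measurable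
  have [measurable]: "L \<in> borel_measurable borel" unfolding L_def by measurable
  have eq: "partial_int a0 a \<psi> n R = (\<integral>s. G R s \<partial>?\<mu>)" if R: "R \<ge> 0" for R
  proof -
    let ?f = "\<lambda>z s. indicator {0..R} z * (Defs.sinc (a0 * z) * cos (z * s))"
    have "partial_int a0 a \<psi> n R = (LBINT z=ereal 0..ereal R. Defs.sinc (a0 * z) * (\<integral>s. cos (z * s) \<partial>?\<mu>))"
      unfolding partial_int_def char by (simp add: zero_ereal_def)
    also have "\<dots> = (LBINT z : {0..R}. Defs.sinc (a0 * z) * (\<integral>s. cos (z * s) \<partial>?\<mu>))"
      by (rule interval_integral_Icc) fact
    also have "\<dots> = (\<integral>z. (\<integral>s. ?f z s \<partial>?\<mu>) \<partial>lborel)"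
      unfolding set_lebesgue_integral_def
      by (intro Bochner_Integration.integral_cong refl) (simp add: mult.assoc)
    also have "\<dots> = (\<integral>s. (\<integral>z. ?f z s \<partial>lborel) \<partial>?\<mu>)"
    proof (rule Q.Fubini_integral[symmetric])
      show "integrable (lborel \<Otimes>\<^sub>M ?\<mu>) (case_prod ?f)"
      proof (rule integrableI_bounded_set[where A="{0..R} \<times> UNIV" and B=1])
        show "emeasure (lborel \<Otimes>\<^sub>M ?\<mu>) ({0..R} \<times> UNIV) < \<infinity>"
          using P.emeasure_pair_measure_Times[of "{0..R}" lborel UNIV] R
          by (simp add: P.emeasure_space_1[simplified])
        show "AE x in lborel \<Otimes>\<^sub>M ?\<mu>. x \<in> {0..R} \<times> UNIV \<longrightarrow> norm (case_prod ?f x) \<le> 1"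
        proof (intro AE_I2 impI)
          fix x :: "real \<times> real"
          obtain z s where x: "x = (z, s)" by (cases x)
          have "\<bar>indicator {0..R} z * (Defs.sinc (a0 * z) * cos (z * s))\<bar> \<le> 1"
            unfolding abs_mult using abs_sinc_le[of "a0 * z"] abs_cos_le_one[of "z * s"]
            by (intro mult_le_one) (auto split: split_indicator)
          then show "norm (case_prod ?f x) \<le> 1" by (simp add: x)
        qed
        show "AE x in lborel \<Otimes>\<^sub>M ?\<mu>. x \<notin> {0..R} \<times> UNIV \<longrightarrow> case_prod ?f x = 0"
          by (intro AE_I2) (auto split: split_indicator prod.splits)
      qed auto
    qed
    also have "\<dots> = (\<integral>s. G R s \<partial>?\<mu>)"
      using G_eq[OF R assms(2)] by (simp add: G_def)
    finally show ?thesis .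
  qed
  have lim: "((\<lambda>R. \<integral>s. G R s \<partial>?\<mu>) \<longlongrightarrow> (\<integral>s. L s \<partial>?\<mu>)) at_top"
  proof (rule integral_dominated_convergence_at_top[where w="\<lambda>_. (1 / (2 * a0)) * (B + B)"])
    show "AE s in ?\<mu>. ((\<lambda>R. G R s) \<longlongrightarrow> L s) at_top"
      unfolding G_def L_def by (intro AE_I2 tendsto_intros sgnSi_lim)
    show "\<forall>\<^sub>F R in at_top. AE s in ?\<mu>. norm (G R s) \<le> (1 / (2 * a0)) * (B + B)"
    proof (intro always_eventually allI AE_I2)
      fix R s
      have b: "\<bar>sgn \<theta> * Si (R * \<bar>\<theta>\<bar>)\<bar> \<le> B" for \<theta> :: real
        using B[of "R * \<bar>\<theta>\<bar>"] B[of 0] by (cases "\<theta> = 0") (auto simp: abs_mult abs_sgn_eq)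
      have "norm (G R s) = (1 / (2 * a0)) * \<bar>sgn (a0 + s) * Si (R * \<bar>a0 + s\<bar>) + sgn (a0 - s) * Si (R * \<bar>a0 - s\<bar>)\<bar>"
        using assms(2) by (simp add: G_def abs_mult)
      also have "\<dots> \<le> (1 / (2 * a0)) * (B + B)"
        using assms(2) b[of "a0 + s"] b[of "a0 - s"]
        by (intro mult_left_mono abs_triangle_ineq[THEN order_trans] add_mono) auto
      finally show "norm (G R s) \<le> (1 / (2 * a0)) * (B + B)" .
    qed
  qed auto
  have lim2: "(partial_int a0 a \<psi> n \<longlongrightarrow> (\<integral>s. L s \<partial>?\<mu>)) at_top"
  proof (rule Lim_transform_eventually[OF lim])
    show "\<forall>\<^sub>F R in at_top. (\<integral>s. G R s \<partial>?\<mu>) = partial_int a0 a \<psi> n R"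
      using eventually_ge_at_top[of "0::real"] by eventually_elim (simp add: eq)
  qed
  have intL: "integrable ?\<mu> L"
  proof (rule P.integrable_const_bound[where B="pi / (2 * a0)"])
    show "AE x in ?\<mu>. norm (L x) \<le> pi / (2 * a0)"
    proof (intro AE_I2)
      fix x
      have "\<bar>sgn (a0 + x) * (pi / 2) + sgn (a0 - x) * (pi / 2)\<bar> \<le> pi / 2 + pi / 2"
        by (intro abs_triangle_ineq[THEN order_trans] add_mono) (auto simp: abs_mult abs_sgn_eq)
      then show "norm (L x) \<le> pi / (2 * a0)"
        using assms(2) by (simp add: L_def abs_mult field_simps)
    qed
  qed simp
  show ?thesis
  proof (intro conjI impI)
    assume big: "?S < a0"
    have "(\<integral>s. L s \<partial>?\<mu>) = (\<integral>s. pi / (2 * a0) \<partial>?\<mu>)"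
    proof (rule integral_cong_AE)
      show "AE s in ?\<mu>. L s = pi / (2 * a0)"
        using AEb
      proof eventually_elim
        case (elim s)
        then have "a0 + s > 0" "a0 - s > 0" using big by auto
        then show ?case using assms(2) by (simp add: L_def field_simps)
      qed
    qed auto
    also have "\<dots> = pi / (2 * a0)" by (simp add: P.prob_space[unfolded space_mu])
    finally show "(partial_int a0 a \<psi> n \<longlongrightarrow> pi / (2 * a0)) at_top" using lim2 by simp
  next
    assume small: "a0 < ?S"
    have intI: "integrable ?\<mu> (indicator {a0<..} :: real \<Rightarrow> real)"
      by (rule P.integrable_const_bound[where B=1]) (auto split: split_indicator)
    have mpos: "measure ?\<mu> {a0<..} > 0"
      using posm[OF small] by (simp add: P.emeasure_eq_measure)
    have "(\<integral>s. L s \<partial>?\<mu>) \<le> (\<integral>s. pi / (2 * a0) - pi / (2 * a0) * indicator {a0<..} s \<partial>?\<mu>)"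
    proof (rule integral_mono[OF intL])
      show "integrable ?\<mu> (\<lambda>s. pi / (2 * a0) - pi / (2 * a0) * indicator {a0<..} s)"
        by (intro Bochner_Integration.integrable_diff integrable_mult_right) (auto simp: intI)
      fix s
      show "L s \<le> pi / (2 * a0) - pi / (2 * a0) * indicator {a0<..} s"
      proof (cases "s > a0")
        case True
        then have "a0 + s > 0" "a0 - s < 0" using assms(2) by auto
        then show ?thesis using True by (simp add: L_def)
      next
        case False
        have "L s \<le> (1 / (2 * a0)) * (pi / 2 + pi / 2)"
          unfolding L_def using assms(2) by (intro mult_left_mono add_mono) (auto simp: sgn_real_def)
        then show ?thesis using False by simp
      qed
    qed
    also have "\<dots> = pi / (2 * a0) - pi / (2 * a0) * measure ?\<mu> {a0<..}"
      by (subst Bochner_Integration.integral_diff) (auto simp: P.prob_space[unfolded space_mu] intI)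
    also have "\<dots> < pi / (2 * a0)"
      using mpos assms(2) by simp
    finally show "\<exists>I. (partial_int a0 a \<psi> n \<longlongrightarrow> I) at_top \<and> I < pi / (2 * a0)"
      using lim2 by blast
  qed
qed


end
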